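(* Consider the DS-PSRL algorithm run on a weakly communicating parametrized MDP whose differential value functions satisfy $h(x,\theta)\in[0,H]$ for all $x,\theta$. Then the Bayes regret satisfies \[ R_T=\sum_{t=1}^T\mathbb{E}\big[\ell(x_t,a_t)-J(\theta_* )\big]\le H\sum_{t=1}^T\mathbb{E}[\mathbf{1}\{A_t\}]+\sum_{t=1}^T\mathbb{E}\big[h_t(x_{t+1})-h_t(\widetilde x_{t+1})\big]+H, \] where $A_t$ is the event that the algorithm changed its policy at time $t$.
   Context: Setting: parametrized MDP $(\mathcal{X},\mathcal{A},\ell,P^{\theta_*})$ with unknown parameter $\theta_*\in\Theta\subseteq\mathbb{R}$ drawn from a known prior; transitions $P(\cdot\mid x,a,\theta)$ and loss $\ell$ known. $J(\theta)$ is the optimal average loss and $h(\cdot,\theta)$ the differential value function with parameter $\theta$, satisfying the Bellman equation $J(\theta)+h(x,\theta)=\min_a\{\ell(x,a)+\mathbb{E}_{y\sim P(\cdot\mid x,a,\theta)}h(y,\theta)\}$. DS-PSRL: set $L=1$; at each $t=1,2,\dots$, if $t=L$ sample $\widetilde\theta_t$ from the current posterior of $\theta_*$ and set $L\leftarrow2L$, else $\widetilde\theta_t=\widetilde\theta_{t-1}$; play $a_t=\pi^*(x_t,\widetilde\theta_t)$, an action of an optimal policy for parameter $\widetilde\theta_t$ (attaining the minimum in the Bellman equation); observe $x_{t+1}\sim P(\cdot\mid x_t,a_t,\theta_* )$ and update the posterior. Notation: $h_t(x)=h(x,\widetilde\theta_t)$; $\widetilde x_{t+1}\sim P(\cdot\mid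 x_t,a_t,\widetilde\theta_t)$ is an imaginary next state under the sampled parameter. *)

theory Defs
  imports "HOL-Probability.Probability"
begin

text \<open>DS-PSRL resampling schedule: starting with L = 1, a new parameter is sampled at
  time t iff t = L, after which L is doubled.\<close>
definition ds_sample_time :: "nat \<Rightarrow> bool" where
  "ds_sample_time t \<longleftrightarrow> (\<exists>k. t = 2 ^ k)"

definition policy_change_event :: "'w measure \<Rightarrow> nat \<Rightarrow> 'w set" where
  "policy_change_event M t = {\<omega> \<in> space M. ds_sample_time t}"

definition history ::
  "('x \<Rightarrow> real \<Rightarrow> 'a) \<Rightarrow> (nat \<Rightarrow> 'w \<Rightarrow> 'x) \<Rightarrow> (nat \<Rightarrow> 'w \<Rightarrow> real) \<Rightarrow> nat \<Rightarrow> 'w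
     \<Rightarrow> 'x list \<times> 'a list" where
  "history \<pi> x th t \<omega> =
     (map (\<lambda>s. x s \<omega>) [1..<Suc t], map (\<lambda>s. \<pi> (x s \<omega>) (th s \<omega>)) [1..<t])"

end

theory Submission
  imports Defs
begin


lemma meas_comb:
  fixes f :: "'w \<Rightarrow> 'a::countable" and g :: "'w \<Rightarrow> 'b::countable"
  assumes "f \<in> M \<rightarrow>\<^sub>M count_space UNIV" "g \<in> M \<rightarrow>\<^sub>M count_space UNIV"
  shows "(\<lambda>\<omega>. c (f \<omega>) (g \<omega>)) \<in> M \<rightarrow>\<^sub>M count_space UNIV"
proof (rule measurable_compose_countable'[where g=f and f="\<lambda>i \<omega>. c i (g \<omega>)" and I=UNIV])
  fix i show "(\<lambda>\<omega>. c i (g \<omega>)) \<in> M \<rightarrow>\<^sub>M count_space UNIV"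
    by (rule measurable_compose_countable'[where g=g and f="\<lambda>j \<omega>. c i j" and I=UNIV]) (auto simp: assms)
qed (auto simp: assms)

lemma meas_map:
  assumes "\<And>s. g s \<in> M \<rightarrow>\<^sub>M count_space (UNIV::'a::countable set)"
  shows "(\<lambda>\<omega>. map (\<lambda>s. g s \<omega>) xs) \<in> M \<rightarrow>\<^sub>M count_space UNIV"
proof (induction xs)
  case Nil then show ?case by simp
next
  case (Cons a xs)
  have "(\<lambda>\<omega>. (#) (g a \<omega>) (map (\<lambda>s. g s \<omega>) xs)) \<in> M \<rightarrow>\<^sub>M count_space UNIV"
    by (rule meas_comb[OF assms Cons])
  then show ?case by simp
qed

lemma sum_part:
  fixes f :: "'w \<Rightarrow> 'c::countable" and u v :: "'w \<Rightarrow> ennreal"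
  assumes f: "f \<in> M \<rightarrow>\<^sub>M count_space UNIV" and u: "u \<in> borel_measurable M" and v: "v \<in> borel_measurable M"
   and eq: "\<And>c. (\<integral>\<^sup>+\<omega>. indicator {\<omega>\<in>space M. f \<omega> = c} \<omega> * u \<omega> \<partial>M) = (\<integral>\<^sup>+\<omega>. indicator {\<omega>\<in>space M. f \<omega> = c} \<omega> * v \<omega> \<partial>M)"
  shows "(\<integral>\<^sup>+\<omega>. u \<omega> \<partial>M) = (\<integral>\<^sup>+\<omega>. v \<omega> \<partial>M)"
proof -
  have expand: "(\<integral>\<^sup>+\<omega>. w \<omega> \<partial>M) = (\<integral>\<^sup>+c. \<integral>\<^sup>+\<omega>. indicator {\<omega>\<in>space M. f \<omega> = c} \<omega> * w \<omega> \<partial>M \<partial>count_space UNIV)"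
    if w: "w \<in> borel_measurable M" for w :: "'w \<Rightarrow> ennreal"
  proof -
    have sets: "{\<omega>\<in>space M. f \<omega> = c} \<in> sets M" for c
      using f by (simp add: measurable_count_space_eq2_countable vimage_def Int_def conj_commute)
    have "(\<integral>\<^sup>+\<omega>. w \<omega> \<partial>M) = (\<integral>\<^sup>+\<omega>. \<integral>\<^sup>+c. indicator {\<omega>\<in>space M. f \<omega> = c} \<omega> * w \<omega> \<partial>count_space UNIV \<partial>M)"
    proof (rule nn_integral_cong)
      fix \<omega> assume om: "\<omega> \<in> space M"
      have "(\<integral>\<^sup>+c. indicator {\<omega>\<in>space M. f \<omega> = c} \<omega> * w \<omega> \<partial>count_space UNIV)
          = (\<integral>\<^sup>+c. w \<omega> * indicator {f \<omega>} c \<partial>count_space UNIV)"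
        using om by (intro nn_integral_cong) (auto simp: indicator_def)
      also have "\<dots> = w \<omega>" by (subst nn_integral_cmult_indicator) auto
      finally show "w \<omega> = (\<integral>\<^sup>+c. indicator {\<omega>\<in>space M. f \<omega> = c} \<omega> * w \<omega> \<partial>count_space UNIV)" by simp
    qed
    also have "\<dots> = (\<integral>\<^sup>+c. \<integral>\<^sup>+\<omega>. indicator {\<omega>\<in>space M. f \<omega> = c} \<omega> * w \<omega> \<partial>M \<partial>count_space UNIV)"
      by (rule nn_integral_count_space_nn_integral) (auto intro!: borel_measurable_times_ennreal w borel_measurable_indicator sets)
    finally show ?thesis .
  qed
  show ?thesis by (simp add: expand[OF u] expand[OF v] eq)
qed

lemma point_int:
  fixes f :: "'w \<Rightarrow> 'c::countable" and w :: "'c \<Rightarrow> ennreal"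
  assumes "\<omega> \<in> space M"
  shows "(\<integral>\<^sup>+c. indicator {\<omega>\<in>space M. f \<omega> = c} \<omega> * w c \<partial>count_space UNIV) = w (f \<omega>)"
proof -
  have "(\<integral>\<^sup>+c. indicator {\<omega>\<in>space M. f \<omega> = c} \<omega> * w c \<partial>count_space UNIV)
      = (\<integral>\<^sup>+c. w (f \<omega>) * indicator {f \<omega>} c \<partial>count_space UNIV)"
    using assms by (intro nn_integral_cong) (auto simp: indicator_def)
  also have "\<dots> = w (f \<omega>)" by (subst nn_integral_cmult_indicator) auto
  finally show ?thesis .
qed

lemma sets_eq_c:
  fixes f :: "'w \<Rightarrow> 'c::countable"
  assumes "f \<in> M \<rightarrow>\<^sub>M count_space UNIV"
  shows "{\<omega>\<in>space M. f \<omega> = c} \<in> sets M"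
  using assms by (simp add: measurable_count_space_eq2_countable vimage_def Int_def conj_commute)

lemma same_law:
  fixes Hs :: "'w \<Rightarrow> 'c::countable" and A Bv :: "'w \<Rightarrow> real"
  assumes prob: "prob_space M" and Hs: "Hs \<in> M \<rightarrow>\<^sub>M count_space UNIV"
    and A: "A \<in> borel_measurable M" and Bv: "Bv \<in> borel_measurable M"
    and eq: "\<And>hs Bs. Bs \<in> sets borel \<Longrightarrow>
       measure M {\<omega>\<in>space M. A \<omega> \<in> Bs \<and> Hs \<omega> = hs} * measure M {\<omega>\<in>space M. Hs \<omega> = hs}
     = measure M {\<omega>\<in>space M. Bv \<omega> \<in> Bs \<and> Hs \<omega> = hs} * measure M {\<omega>\<in>space M. Hs \<omega> = hs}"
  shows "distr M borel A = distr M borel Bv"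
proof (rule measure_eqI)
  interpret prob_space M by (rule prob)
  fix Bs assume Bs: "Bs \<in> sets (distr M borel A)"
  then have Bs': "Bs \<in> sets borel" by simp
  have SA: "{\<omega>\<in>space M. A \<omega> \<in> Bs \<and> Hs \<omega> = hs} \<in> sets M" for hs
    proof -
    have "{\<omega>\<in>space M. A \<omega> \<in> Bs \<and> Hs \<omega> = hs} = {\<omega>\<in>space M. Hs \<omega> = hs} \<inter> (A -` Bs \<inter> space M)" by auto
    then show ?thesis using sets_eq_c[OF Hs] measurable_sets[OF A Bs'] by auto
  qed
  have SB: "{\<omega>\<in>space M. Bv \<omega> \<in> Bs \<and> Hs \<omega> = hs} \<in> sets M" for hs
    proof -
    have "{\<omega>\<in>space M. Bv \<omega> \<in> Bs \<and> Hs \<omega> = hs} = {\<omega>\<in>space M. Hs \<omega> = hs} \<inter> (Bv -` Bs \<inter> space M)" by auto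
    then show ?thesis using sets_eq_c[OF Hs] measurable_sets[OF Bv Bs'] by auto
  qed
  have "(\<integral>\<^sup>+\<omega>. indicator (A -` Bs \<inter> space M) \<omega> \<partial>M) = (\<integral>\<^sup>+\<omega>. indicator (Bv -` Bs \<inter> space M) \<omega> \<partial>M)"
  proof (rule sum_part[OF Hs])
    show "(\<lambda>\<omega>. indicator (A -` Bs \<inter> space M) \<omega> :: ennreal) \<in> borel_measurable M"
      using measurable_sets[OF A Bs'] by simp
    show "(\<lambda>\<omega>. indicator (Bv -` Bs \<inter> space M) \<omega> :: ennreal) \<in> borel_measurable M"
      using measurable_sets[OF Bv Bs'] by simp
    fix c
    have "(\<integral>\<^sup>+\<omega>. indicator {\<omega>\<in>space M. Hs \<omega> = c} \<omega> * indicator (A -` Bs \<inter> space M) \<omega> \<partial>M)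
       = (\<integral>\<^sup>+\<omega>. indicator {\<omega>\<in>space M. A \<omega> \<in> Bs \<and> Hs \<omega> = c} \<omega> \<partial>M)"
      by (intro nn_integral_cong) (auto split: split_indicator)
    also have "\<dots> = ennreal (measure M {\<omega>\<in>space M. A \<omega> \<in> Bs \<and> Hs \<omega> = c})"
      using SA by (simp add: emeasure_eq_measure)
    also have "measure M {\<omega>\<in>space M. A \<omega> \<in> Bs \<and> Hs \<omega> = c} = measure M {\<omega>\<in>space M. Bv \<omega> \<in> Bs \<and> Hs \<omega> = c}"
    proof (cases "measure M {\<omega>\<in>space M. Hs \<omega> = c} = 0")
      case True
      have "measure M {\<omega>\<in>space M. A \<omega> \<in> Bs \<and> Hs \<omega> = c} \<le> measure M {\<omega>\<in>space M. Hs \<omega> = c}"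
        by (rule finite_measure_mono) (auto intro: sets_eq_c[OF Hs])
      moreover have "measure M {\<omega>\<in>space M. Bv \<omega> \<in> Bs \<and> Hs \<omega> = c} \<le> measure M {\<omega>\<in>space M. Hs \<omega> = c}"
        by (rule finite_measure_mono) (auto intro: sets_eq_c[OF Hs])
      ultimately show ?thesis using True measure_nonneg[of M "{\<omega>\<in>space M. A \<omega> \<in> Bs \<and> Hs \<omega> = c}"] measure_nonneg[of M "{\<omega>\<in>space M. Bv \<omega> \<in> Bs \<and> Hs \<omega> = c}"] by linarith
    next
      case False then show ?thesis using eq[OF Bs', of c] by simp
    qed
    also have "ennreal (measure M {\<omega>\<in>space M. Bv \<omega> \<in> Bs \<and> Hs \<omega> = c}) = (\<integral>\<^sup>+\<omega>. indicator {\<omega>\<in>space M. Bv \<omega> \<in> Bs \<and> Hs \<omega> = c} \<omega> \<partial>M)"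
      using SB by (simp add: emeasure_eq_measure)
    also have "\<dots> = (\<integral>\<^sup>+\<omega>. indicator {\<omega>\<in>space M. Hs \<omega> = c} \<omega> * indicator (Bv -` Bs \<inter> space M) \<omega> \<partial>M)"
      by (intro nn_integral_cong) (auto split: split_indicator)
    finally show "(\<integral>\<^sup>+\<omega>. indicator {\<omega>\<in>space M. Hs \<omega> = c} \<omega> * indicator (A -` Bs \<inter> space M) \<omega> \<partial>M)
       = (\<integral>\<^sup>+\<omega>. indicator {\<omega>\<in>space M. Hs \<omega> = c} \<omega> * indicator (Bv -` Bs \<inter> space M) \<omega> \<partial>M)" .
  qed
  then show "emeasure (distr M borel A) Bs = emeasure (distr M borel Bv) Bs"
    using measurable_sets[OF A Bs'] measurable_sets[OF Bv Bs']
    by (simp add: emeasure_distr[OF A Bs'] emeasure_distr[OF Bv Bs'])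
qed simp

lemma cond_law:
  fixes Hs :: "'w \<Rightarrow> 'c::countable" and Y :: "'w \<Rightarrow> 'x::countable" and Th :: "'w \<Rightarrow> real"
    and p :: "'w \<Rightarrow> 'x \<Rightarrow> real" and \<phi> :: "'x \<Rightarrow> real \<Rightarrow> real"
  assumes prob: "prob_space M" and Hs: "Hs \<in> M \<rightarrow>\<^sub>M count_space UNIV"
    and Y: "Y \<in> M \<rightarrow>\<^sub>M count_space UNIV" and Th: "Th \<in> borel_measurable M"
    and p_meas: "\<And>y. (\<lambda>\<omega>. p \<omega> y) \<in> borel_measurable M"
    and p_nn: "\<And>\<omega> y. 0 \<le> p \<omega> y" and p_le: "\<And>\<omega> y. p \<omega> y \<le> 1"
    and eq: "\<And>hs D y. D \<in> sets borel \<Longrightarrow>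
       measure M {\<omega>\<in>space M. Hs \<omega> = hs \<and> Th \<omega> \<in> D \<and> Y \<omega> = y}
     = (\<integral>\<omega>. indicator {\<omega>\<in>space M. Hs \<omega> = hs \<and> Th \<omega> \<in> D} \<omega> * p \<omega> y \<partial>M)"
    and \<phi>: "\<And>y. \<phi> y \<in> borel_measurable borel"
  shows "(\<integral>\<^sup>+\<omega>. ennreal (\<phi> (Y \<omega>) (Th \<omega>)) \<partial>M)
       = (\<integral>\<^sup>+\<omega>. \<integral>\<^sup>+y. ennreal (p \<omega> y) * ennreal (\<phi> y (Th \<omega>)) \<partial>count_space UNIV \<partial>M)"
proof -
  interpret prob_space M by (rule prob)
  have SY: "{\<omega>\<in>space M. Y \<omega> = y} \<in> sets M" for y by (rule sets_eq_c[OF Y])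
  have SH: "{\<omega>\<in>space M. Hs \<omega> = y} \<in> sets M" for y by (rule sets_eq_c[OF Hs])
  have stepb: "emeasure M {\<omega>\<in>space M. Th \<omega> \<in> D \<and> Y \<omega> = y}
      = (\<integral>\<^sup>+\<omega>. ennreal (p \<omega> y) * indicator (Th -` D \<inter> space M) \<omega> \<partial>M)"
    if D: "D \<in> sets borel" for D y
  proof -
    have TD: "Th -` D \<inter> space M \<in> sets M" by (rule measurable_sets[OF Th D])
    have S1: "{\<omega>\<in>space M. Th \<omega> \<in> D \<and> Y \<omega> = y} \<in> sets M"
    proof -
      have "{\<omega>\<in>space M. Th \<omega> \<in> D \<and> Y \<omega> = y} = (Th -` D \<inter> space M) \<inter> {\<omega>\<in>space M. Y \<omega> = y}" by auto
      then show ?thesis using TD SY by auto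
    qed
    have S2: "{\<omega>\<in>space M. Hs \<omega> = c \<and> Th \<omega> \<in> D \<and> Y \<omega> = y} \<in> sets M" for c
    proof -
      have "{\<omega>\<in>space M. Hs \<omega> = c \<and> Th \<omega> \<in> D \<and> Y \<omega> = y} = {\<omega>\<in>space M. Hs \<omega> = c} \<inter> {\<omega>\<in>space M. Th \<omega> \<in> D \<and> Y \<omega> = y}" by auto
      then show ?thesis using S1 SH by auto
    qed
    have S3: "{\<omega>\<in>space M. Hs \<omega> = c \<and> Th \<omega> \<in> D} \<in> sets M" for c
    proof -
      have "{\<omega>\<in>space M. Hs \<omega> = c \<and> Th \<omega> \<in> D} = {\<omega>\<in>space M. Hs \<omega> = c} \<inter> (Th -` D \<inter> space M)" by auto
      then show ?thesis using TD SH by auto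
    qed
    have "emeasure M {\<omega>\<in>space M. Th \<omega> \<in> D \<and> Y \<omega> = y} = (\<integral>\<^sup>+\<omega>. indicator {\<omega>\<in>space M. Th \<omega> \<in> D \<and> Y \<omega> = y} \<omega> \<partial>M)"
      using S1 by simp
    also have "\<dots> = (\<integral>\<^sup>+\<omega>. ennreal (p \<omega> y) * indicator (Th -` D \<inter> space M) \<omega> \<partial>M)"
    proof (rule sum_part[OF Hs])
      show "(\<lambda>\<omega>. indicator {\<omega>\<in>space M. Th \<omega> \<in> D \<and> Y \<omega> = y} \<omega> :: ennreal) \<in> borel_measurable M"
        using S1 by simp
      show "(\<lambda>\<omega>. ennreal (p \<omega> y) * indicator (Th -` D \<inter> space M) \<omega>) \<in> borel_measurable M"
        using TD p_meas by (intro borel_measurable_times_ennreal) auto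
      fix c
      have "(\<integral>\<^sup>+\<omega>. indicator {\<omega>\<in>space M. Hs \<omega> = c} \<omega> * indicator {\<omega>\<in>space M. Th \<omega> \<in> D \<and> Y \<omega> = y} \<omega> \<partial>M)
         = (\<integral>\<^sup>+\<omega>. indicator {\<omega>\<in>space M. Hs \<omega> = c \<and> Th \<omega> \<in> D \<and> Y \<omega> = y} \<omega> \<partial>M)"
        by (intro nn_integral_cong) (auto split: split_indicator)
      also have "\<dots> = ennreal (measure M {\<omega>\<in>space M. Hs \<omega> = c \<and> Th \<omega> \<in> D \<and> Y \<omega> = y})"
        using S2 by (simp add: emeasure_eq_measure)
      also have "\<dots> = ennreal (\<integral>\<omega>. indicator {\<omega>\<in>space M. Hs \<omega> = c \<and> Th \<omega> \<in> D} \<omega> * p \<omega> y \<partial>M)"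
        using eq[OF D] by simp
      also have "\<dots> = (\<integral>\<^sup>+\<omega>. ennreal (indicator {\<omega>\<in>space M. Hs \<omega> = c \<and> Th \<omega> \<in> D} \<omega> * p \<omega> y) \<partial>M)"
      proof (rule nn_integral_eq_integral[symmetric])
        show "integrable M (\<lambda>\<omega>. indicator {\<omega>\<in>space M. Hs \<omega> = c \<and> Th \<omega> \<in> D} \<omega> * p \<omega> y)"
          by (rule integrable_const_bound[where B=1])
             (auto simp: p_nn p_le split: split_indicator intro!: borel_measurable_times borel_measurable_indicator S3 p_meas)
        show "AE x in M. 0 \<le> indicator {\<omega>\<in>space M. Hs \<omega> = c \<and> Th \<omega> \<in> D} x * p x y"
          by (auto simp: p_nn)
      qed
      also have "\<dots> = (\<integral>\<^sup>+\<omega>. indicator {\<omega>\<in>space M. Hs \<omega> = c} \<omega> * (ennreal (p \<omega> y) * indicator (Th -` D \<inter> space M) \<omega>) \<partial>M)"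
        by (intro nn_integral_cong) (auto split: split_indicator)
      finally show "(\<integral>\<^sup>+\<omega>. indicator {\<omega>\<in>space M. Hs \<omega> = c} \<omega> * indicator {\<omega>\<in>space M. Th \<omega> \<in> D \<and> Y \<omega> = y} \<omega> \<partial>M)
         = (\<integral>\<^sup>+\<omega>. indicator {\<omega>\<in>space M. Hs \<omega> = c} \<omega> * (ennreal (p \<omega> y) * indicator (Th -` D \<inter> space M) \<omega>) \<partial>M)" .
    qed
    finally show ?thesis .
  qed
  have stepc: "(\<integral>\<^sup>+\<omega>. indicator {\<omega>\<in>space M. Y \<omega> = y} \<omega> * ennreal (\<phi> y (Th \<omega>)) \<partial>M)
     = (\<integral>\<^sup>+\<omega>. ennreal (p \<omega> y) * ennreal (\<phi> y (Th \<omega>)) \<partial>M)" for y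
  proof -
    let ?f1 = "\<lambda>\<omega>. indicator {\<omega>\<in>space M. Y \<omega> = y} \<omega> :: ennreal"
    let ?f2 = "\<lambda>\<omega>. ennreal (p \<omega> y)"
    have f1: "?f1 \<in> borel_measurable M" using SY by simp
    have f2: "?f2 \<in> borel_measurable M" using p_meas by simp
    have Th1: "Th \<in> density M ?f1 \<rightarrow>\<^sub>M borel" using Th by simp
    have Th2: "Th \<in> density M ?f2 \<rightarrow>\<^sub>M borel" using Th by simp
    have N: "distr (density M ?f1) borel Th = distr (density M ?f2) borel Th"
    proof (rule measure_eqI)
      fix D assume "D \<in> sets (distr (density M ?f1) borel Th)"
      then have D: "D \<in> sets borel" by simp
      have TD: "Th -` D \<inter> space M \<in> sets M" by (rule measurable_sets[OF Th D])
      have "emeasure (distr (density M ?f1) borel Th) D = emeasure (density M ?f1) (Th -` D \<inter> space M)"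
        by (simp add: emeasure_distr[OF Th1 D])
      also have "\<dots> = (\<integral>\<^sup>+\<omega>. ?f1 \<omega> * indicator (Th -` D \<inter> space M) \<omega> \<partial>M)"
        by (rule emeasure_density[OF f1 TD])
      also have "\<dots> = (\<integral>\<^sup>+\<omega>. indicator {\<omega>\<in>space M. Th \<omega> \<in> D \<and> Y \<omega> = y} \<omega> \<partial>M)"
        by (intro nn_integral_cong) (auto split: split_indicator)
      also have "\<dots> = emeasure M {\<omega>\<in>space M. Th \<omega> \<in> D \<and> Y \<omega> = y}"
      proof -
        have "{\<omega>\<in>space M. Th \<omega> \<in> D \<and> Y \<omega> = y} = (Th -` D \<inter> space M) \<inter> {\<omega>\<in>space M. Y \<omega> = y}" by auto
        then have "{\<omega>\<in>space M. Th \<omega> \<in> D \<and> Y \<omega> = y} \<in> sets M" using TD SY by auto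
        then show ?thesis by simp
      qed
      also have "\<dots> = (\<integral>\<^sup>+\<omega>. ?f2 \<omega> * indicator (Th -` D \<inter> space M) \<omega> \<partial>M)"
        by (rule stepb[OF D])
      also have "\<dots> = emeasure (density M ?f2) (Th -` D \<inter> space M)"
        by (rule emeasure_density[OF f2 TD, symmetric])
      also have "\<dots> = emeasure (distr (density M ?f2) borel Th) D"
        by (simp add: emeasure_distr[OF Th2 D])
      finally show "emeasure (distr (density M ?f1) borel Th) D = emeasure (distr (density M ?f2) borel Th) D" .
    qed simp
    have ph: "(\<lambda>\<theta>. ennreal (\<phi> y \<theta>)) \<in> borel_measurable borel" using \<phi> by simp
    have "(\<integral>\<^sup>+\<omega>. ?f1 \<omega> * ennreal (\<phi> y (Th \<omega>)) \<partial>M) = (\<integral>\<^sup>+\<omega>. ennreal (\<phi> y (Th \<omega>)) \<partial>density M ?f1)"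
      using ph Th by (subst nn_integral_density) (auto simp: f1)
    also have "\<dots> = (\<integral>\<^sup>+\<theta>. ennreal (\<phi> y \<theta>) \<partial>distr (density M ?f1) borel Th)"
      using ph by (subst nn_integral_distr[OF Th1]) auto
    also have "\<dots> = (\<integral>\<^sup>+\<theta>. ennreal (\<phi> y \<theta>) \<partial>distr (density M ?f2) borel Th)" by (simp only: N)
    also have "\<dots> = (\<integral>\<^sup>+\<omega>. ennreal (\<phi> y (Th \<omega>)) \<partial>density M ?f2)"
      using ph by (subst nn_integral_distr[OF Th2]) auto
    also have "\<dots> = (\<integral>\<^sup>+\<omega>. ?f2 \<omega> * ennreal (\<phi> y (Th \<omega>)) \<partial>M)"
      using ph Th by (subst nn_integral_density) (auto simp: f2)
    finally show ?thesis .
  qed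
  have "(\<integral>\<^sup>+\<omega>. ennreal (\<phi> (Y \<omega>) (Th \<omega>)) \<partial>M)
      = (\<integral>\<^sup>+\<omega>. \<integral>\<^sup>+y. indicator {\<omega>\<in>space M. Y \<omega> = y} \<omega> * ennreal (\<phi> y (Th \<omega>)) \<partial>count_space UNIV \<partial>M)"
    by (intro nn_integral_cong) (simp add: point_int[where w="\<lambda>y. ennreal (\<phi> y (Th _))"])
  also have "\<dots> = (\<integral>\<^sup>+y. \<integral>\<^sup>+\<omega>. indicator {\<omega>\<in>space M. Y \<omega> = y} \<omega> * ennreal (\<phi> y (Th \<omega>)) \<partial>M \<partial>count_space UNIV)"
    using SY Th \<phi> by (intro nn_integral_count_space_nn_integral) (auto intro!: borel_measurable_times_ennreal borel_measurable_indicator measurable_compose[OF Th])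
  also have "\<dots> = (\<integral>\<^sup>+y. \<integral>\<^sup>+\<omega>. ennreal (p \<omega> y) * ennreal (\<phi> y (Th \<omega>)) \<partial>M \<partial>count_space UNIV)"
    by (simp add: stepc)
  also have "\<dots> = (\<integral>\<^sup>+\<omega>. \<integral>\<^sup>+y. ennreal (p \<omega> y) * ennreal (\<phi> y (Th \<omega>)) \<partial>count_space UNIV \<partial>M)"
    using p_meas Th \<phi> by (intro nn_integral_count_space_nn_integral[symmetric]) (auto intro!: borel_measurable_times_ennreal measurable_compose[OF Th])
  finally show ?thesis .
qed

lemma telescope:
  fixes a b ind :: "nat \<Rightarrow> real" and H :: real and S :: "nat \<Rightarrow> bool"
  assumes H: "0 \<le> H" and aH: "\<And>t. 1 \<le> t \<Longrightarrow> a t \<le> H" and b0: "\<And>t. 1 \<le> t \<Longrightarrow> 0 \<le> b t"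
    and S1: "S 1" and keep: "\<And>t. 2 \<le> t \<Longrightarrow> \<not> S t \<Longrightarrow> a t = b (t - 1)"
    and ind: "\<And>t. ind t = (if S t then 1 else 0)"
  shows "(\<Sum>t=1..T. a t - b t) \<le> H * (\<Sum>t=1..T. ind t) + H"
proof -
  have main: "1 \<le> T \<Longrightarrow> (\<Sum>t=1..T. a t - b t) + b T \<le> H * (\<Sum>t=1..T. ind t)" for T
  proof (induction T)
    case 0 then show ?case by simp
  next
    case (Suc T)
    show ?case
    proof (cases "T = 0")
      case True then show ?thesis using aH[of 1] S1 ind[of 1] by simp
    next
      case False
      then have IH: "(\<Sum>t=1..T. a t - b t) + b T \<le> H * (\<Sum>t=1..T. ind t)" using Suc by simp
      have step: "a (Suc T) - b T \<le> H * ind (Suc T)"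
      proof (cases "S (Suc T)")
        case True then show ?thesis using aH[of "Suc T"] b0[of T] False ind[of "Suc T"] by simp
      next
        case False' : False
        then show ?thesis using keep[of "Suc T"] False ind[of "Suc T"] by simp
      qed
      have "(\<Sum>t=1..Suc T. a t - b t) + b (Suc T) = ((\<Sum>t=1..T. a t - b t) + b T) + (a (Suc T) - b T)"
        by simp
      also have "\<dots> \<le> H * (\<Sum>t=1..T. ind t) + H * ind (Suc T)" using IH step by linarith
      also have "\<dots> = H * (\<Sum>t=1..Suc T. ind t)" by (simp add: algebra_simps)
      finally show ?thesis .
    qed
  qed
  show ?thesis
  proof (cases "T = 0")
    case True then show ?thesis using H by simp
  next
    case False
    then show ?thesis using main[of T] b0[of T] H by linarith
  qed
qed

theorem lemma2:
  fixes M :: "'w measure"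
    and \<Theta> :: "real set"
    and loss :: "'x::countable \<Rightarrow> 'a::countable \<Rightarrow> real"
    and P :: "'x \<Rightarrow> 'a \<Rightarrow> real \<Rightarrow> 'x pmf"
    and J :: "real \<Rightarrow> real"
    and h :: "'x \<Rightarrow> real \<Rightarrow> real"
    and \<pi> :: "'x \<Rightarrow> real \<Rightarrow> 'a"
    and H :: real
    and thS :: "'w \<Rightarrow> real"
    and th :: "nat \<Rightarrow> 'w \<Rightarrow> real"
    and x :: "nat \<Rightarrow> 'w \<Rightarrow> 'x"
    and xi :: "nat \<Rightarrow> 'w \<Rightarrow> 'x"
    and T :: nat
  assumes prob: "prob_space M"
    \<comment> \<open>regularity of the model\<close>
    and loss_bounded: "\<exists>B. \<forall>s a. \<bar>loss s a\<bar> \<le> B"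
    and J_meas: "J \<in> borel_measurable borel"
    and h_meas: "\<And>s. (\<lambda>\<theta>. h s \<theta>) \<in> borel_measurable borel"
    and P_meas: "\<And>s a y. (\<lambda>\<theta>. pmf (P s a \<theta>) y) \<in> borel_measurable borel"
    and pi_meas: "\<And>s. \<pi> s \<in> borel \<rightarrow>\<^sub>M count_space UNIV"
    \<comment> \<open>Bellman equation; pi attains the minimum\<close>
    and bellman_le: "\<And>\<theta> s a. \<theta> \<in> \<Theta> \<Longrightarrow>
        J \<theta> + h s \<theta> \<le> loss s a + measure_pmf.expectation (P s a \<theta>) (\<lambda>y. h y \<theta>)"
    and bellman_eq: "\<And>\<theta> s. \<theta> \<in> \<Theta> \<Longrightarrow>
        J \<theta> + h s \<theta> = loss s (\<pi> s \<theta>) + measure_pmf.expectation (P s (\<pi> s \<theta>) \<theta>) (\<lambda>y. h y \<theta>)"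
    \<comment> \<open>span bound\<close>
    and h_range: "\<And>s \<theta>. \<theta> \<in> \<Theta> \<Longrightarrow> 0 \<le> h s \<theta> \<and> h s \<theta> \<le> H"
    \<comment> \<open>random variables\<close>
    and thS_meas: "thS \<in> borel_measurable M"
    and thS_in: "\<And>\<omega>. \<omega> \<in> space M \<Longrightarrow> thS \<omega> \<in> \<Theta>"
    and th_meas: "\<And>t. th t \<in> borel_measurable M"
    and th_in: "\<And>t \<omega>. 1 \<le> t \<Longrightarrow> \<omega> \<in> space M \<Longrightarrow> th t \<omega> \<in> \<Theta>"
    and x_meas: "\<And>t. x t \<in> M \<rightarrow>\<^sub>M count_space UNIV"
    and xi_meas: "\<And>t. xi t \<in> M \<rightarrow>\<^sub>M count_space UNIV"
    \<comment> \<open>DS-PSRL: keep the sample between sampling times\<close>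
    and keep: "\<And>t \<omega>. 2 \<le> t \<Longrightarrow> \<not> ds_sample_time t \<Longrightarrow> \<omega> \<in> space M \<Longrightarrow>
        th t \<omega> = th (t - 1) \<omega>"
    \<comment> \<open>DS-PSRL: at sampling times, th t is drawn from the posterior of thS given the
        observed history (conditionally independent of thS, with the posterior law)\<close>
    and posterior: "\<And>t hs B C. 1 \<le> t \<Longrightarrow> ds_sample_time t \<Longrightarrow> B \<in> sets borel \<Longrightarrow> C \<in> sets borel \<Longrightarrow>
        measure M {\<omega> \<in> space M. th t \<omega> \<in> B \<and> thS \<omega> \<in> C \<and> history \<pi> x th t \<omega> = hs}
          * measure M {\<omega> \<in> space M. history \<pi> x th t \<omega> = hs}
        = measure M {\<omega> \<in> space M. thS \<omega> \<in> B \<and> history \<pi> x th t \<omega> = hs}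
          * measure M {\<omega> \<in> space M. thS \<omega> \<in> C \<and> history \<pi> x th t \<omega> = hs}"
    \<comment> \<open>true dynamics: x (t+1) ~ P(. | x t, a t, thS) given the past\<close>
    and dynamics: "\<And>t hs C D y. 1 \<le> t \<Longrightarrow> C \<in> sets borel \<Longrightarrow> D \<in> sets borel \<Longrightarrow>
        measure M {\<omega> \<in> space M. history \<pi> x th t \<omega> = hs \<and> thS \<omega> \<in> C \<and> th t \<omega> \<in> D
                                 \<and> x (Suc t) \<omega> = y}
        = (\<integral>\<omega>. indicator {\<omega> \<in> space M. history \<pi> x th t \<omega> = hs \<and> thS \<omega> \<in> C \<and> th t \<omega> \<in> D} \<omega>
               * pmf (P (x t \<omega>) (\<pi> (x t \<omega>) (th t \<omega>)) (thS \<omega>)) y \<partial>M)"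
    \<comment> \<open>imaginary next state: xi t ~ P(. | x t, a t, th t) given the past\<close>
    and imaginary: "\<And>t hs C D y. 1 \<le> t \<Longrightarrow> C \<in> sets borel \<Longrightarrow> D \<in> sets borel \<Longrightarrow>
        measure M {\<omega> \<in> space M. history \<pi> x th t \<omega> = hs \<and> thS \<omega> \<in> C \<and> th t \<omega> \<in> D
                                 \<and> xi t \<omega> = y}
        = (\<integral>\<omega>. indicator {\<omega> \<in> space M. history \<pi> x th t \<omega> = hs \<and> thS \<omega> \<in> C \<and> th t \<omega> \<in> D} \<omega>
               * pmf (P (x t \<omega>) (\<pi> (x t \<omega>) (th t \<omega>)) (th t \<omega>)) y \<partial>M)"
  shows "(\<Sum>t = 1..T. (\<integral>\<omega>. loss (x t \<omega>) (\<pi> (x t \<omega>) (th t \<omega>)) - J (thS \<omega>) \<partial>M))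
         \<le> H * (\<Sum>t = 1..T. (\<integral>\<omega>. indicator (policy_change_event M t) \<omega> \<partial>M))
           + (\<Sum>t = 1..T. (\<integral>\<omega>. h (x (Suc t) \<omega>) (th t \<omega>) - h (xi t \<omega>) (th t \<omega>) \<partial>M))
           + H"
proof -
  interpret prob_space M by (rule prob)
  obtain B where B: "\<And>s a. \<bar>loss s a\<bar> \<le> B" using loss_bounded by blast
  obtain \<omega>0 where om0: "\<omega>0 \<in> space M" using not_empty by blast
  have Hnn: "0 \<le> H" using h_range[OF thS_in[OF om0], of undefined] by linarith
  have hb: "\<And>s t \<omega>. 1 \<le> t \<Longrightarrow> \<omega> \<in> space M \<Longrightarrow> 0 \<le> h s (th t \<omega>) \<and> h s (th t \<omega>) \<le> H"
    using h_range th_in by blast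
  have exp_int: "integrable (measure_pmf q) (\<lambda>y. h y \<theta>)" if "\<theta> \<in> \<Theta>" for \<theta> q
    by (rule measure_pmf.integrable_const_bound[where B=H]) (use h_range[OF that] in auto)
  have exp_bd: "0 \<le> measure_pmf.expectation q (\<lambda>y. h y \<theta>) \<and> measure_pmf.expectation q (\<lambda>y. h y \<theta>) \<le> H"
    if "\<theta> \<in> \<Theta>" for \<theta> q
    using measure_pmf.integral_ge_const[OF exp_int[OF that], of 0] measure_pmf.integral_le_const[OF exp_int[OF that], of H]
      h_range[OF that] by auto
  have J_bd: "\<bar>J \<theta>\<bar> \<le> B + 2 * H" if "\<theta> \<in> \<Theta>" for \<theta>
  proof -
    have e: "J \<theta> = loss undefined (\<pi> undefined \<theta>) + measure_pmf.expectation (P undefined (\<pi> undefined \<theta>) \<theta>) (\<lambda>y. h y \<theta>) - h undefined \<theta>"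
      using bellman_eq[OF that, of undefined] by simp
    show ?thesis using e B[of undefined "\<pi> undefined \<theta>"] exp_bd[OF that, of "P undefined (\<pi> undefined \<theta>) \<theta>"]
      h_range[OF that, of undefined] by linarith
  qed
  have am: "(\<lambda>\<omega>. \<pi> (x t \<omega>) (th t \<omega>)) \<in> M \<rightarrow>\<^sub>M count_space UNIV" for t
    by (rule measurable_compose_countable'[where g="x t" and f="\<lambda>i \<omega>. \<pi> i (th t \<omega>)" and I=UNIV])
       (auto intro: measurable_compose[OF th_meas pi_meas] x_meas)
  have histm: "(\<lambda>\<omega>. history \<pi> x th t \<omega>) \<in> M \<rightarrow>\<^sub>M count_space UNIV" for t
    unfolding history_def
    by (rule meas_comb[where c=Pair]; rule meas_map; simp add: x_meas am)
  have hm: "(\<lambda>\<omega>. h (X \<omega>) (th t \<omega>)) \<in> borel_measurable M" if X: "X \<in> M \<rightarrow>\<^sub>M count_space UNIV" for X t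
    by (rule measurable_compose_countable'[where g=X and f="\<lambda>i \<omega>. h i (th t \<omega>)" and I=UNIV])
       (auto intro: measurable_compose[OF th_meas h_meas] X)
  have Jm: "(\<lambda>\<omega>. J (th t \<omega>)) \<in> borel_measurable M" for t
    by (rule measurable_compose[OF th_meas J_meas])
  have JSm: "(\<lambda>\<omega>. J (thS \<omega>)) \<in> borel_measurable M"
    by (rule measurable_compose[OF thS_meas J_meas])
  have Lm: "(\<lambda>\<omega>. loss (x t \<omega>) (\<pi> (x t \<omega>) (th t \<omega>))) \<in> borel_measurable M" for t
  proof (rule measurable_compose_countable'[where g="x t" and f="\<lambda>i \<omega>. loss i (\<pi> i (th t \<omega>))" and I=UNIV])
    fix i
    show "(\<lambda>\<omega>. loss i (\<pi> i (th t \<omega>))) \<in> borel_measurable M"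
      by (rule measurable_compose_countable'[where g="\<lambda>\<omega>. \<pi> i (th t \<omega>)" and f="\<lambda>j \<omega>. loss i j" and I=UNIV])
         (auto intro: measurable_compose[OF th_meas pi_meas])
  qed (auto intro: x_meas)
  have pm: "(\<lambda>\<omega>. pmf (P (x t \<omega>) (\<pi> (x t \<omega>) (th t \<omega>)) (th t \<omega>)) y) \<in> borel_measurable M" for t y
  proof (rule measurable_compose_countable'[where g="x t" and f="\<lambda>i \<omega>. pmf (P i (\<pi> i (th t \<omega>)) (th t \<omega>)) y" and I=UNIV])
    fix i
    show "(\<lambda>\<omega>. pmf (P i (\<pi> i (th t \<omega>)) (th t \<omega>)) y) \<in> borel_measurable M"
      by (rule measurable_compose_countable'[where g="\<lambda>\<omega>. \<pi> i (th t \<omega>)" and f="\<lambda>j \<omega>. pmf (P i j (th t \<omega>)) y" and I=UNIV])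
         (auto intro: measurable_compose[OF th_meas pi_meas] measurable_compose[OF th_meas P_meas])
  qed (auto intro: x_meas)
  define g where "g t \<omega> = measure_pmf.expectation (P (x t \<omega>) (\<pi> (x t \<omega>) (th t \<omega>)) (th t \<omega>)) (\<lambda>y. h y (th t \<omega>))" for t \<omega>
  have geq: "g t \<omega> = J (th t \<omega>) + h (x t \<omega>) (th t \<omega>) - loss (x t \<omega>) (\<pi> (x t \<omega>) (th t \<omega>))"
    if "1 \<le> t" "\<omega> \<in> space M" for t \<omega>
    using bellman_eq[OF th_in[OF that], of "x t \<omega>"] unfolding g_def by simp
  have gm: "g t \<in> borel_measurable M" if "1 \<le> t" for t
  proof -
    have "(\<lambda>\<omega>. J (th t \<omega>) + h (x t \<omega>) (th t \<omega>) - loss (x t \<omega>) (\<pi> (x t \<omega>) (th t \<omega>))) \<in> borel_measurable M"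
      by (intro borel_measurable_add borel_measurable_diff Jm hm x_meas Lm)
    then show ?thesis using measurable_cong[of M "g t" "\<lambda>\<omega>. J (th t \<omega>) + h (x t \<omega>) (th t \<omega>) - loss (x t \<omega>) (\<pi> (x t \<omega>) (th t \<omega>))"] geq[OF that] by simp
  qed
  have gb: "0 \<le> g t \<omega> \<and> g t \<omega> \<le> H" if "1 \<le> t" "\<omega> \<in> space M" for t \<omega>
    unfolding g_def by (rule exp_bd[OF th_in[OF that]])
  have int_b: "\<And>(f :: 'w \<Rightarrow> real) (C::real). f \<in> borel_measurable M \<Longrightarrow> (\<And>\<omega>. \<omega> \<in> space M \<Longrightarrow> \<bar>f \<omega>\<bar> \<le> C) \<Longrightarrow> integrable M f"
    by (rule integrable_const_bound) auto
  have ih: "integrable M (\<lambda>\<omega>. h (X \<omega>) (th t \<omega>))" if "X \<in> M \<rightarrow>\<^sub>M count_space UNIV" "1 \<le> t" for X t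
    by (rule integrable_const_bound[where B=H, OF _ hm[OF that(1)]]) (use hb[OF that(2)] in force)
  have iJ: "integrable M (\<lambda>\<omega>. J (th t \<omega>))" if "1 \<le> t" for t
    by (rule integrable_const_bound[where B="B + 2*H", OF _ Jm]) (use J_bd th_in that in force)
  have iJS: "integrable M (\<lambda>\<omega>. J (thS \<omega>))"
    by (rule integrable_const_bound[where B="B + 2*H", OF _ JSm]) (use J_bd thS_in in force)
  have ig: "integrable M (g t)" if "1 \<le> t" for t
    by (rule integrable_const_bound[where B=H, OF _ gm[OF that]]) (use gb[OF that] in force)
  have sample_back: "\<exists>s. 1 \<le> s \<and> ds_sample_time s \<and> (\<forall>\<omega>\<in>space M. th t \<omega> = th s \<omega>)" if "1 \<le> t" for t
    using that
  proof (induction t)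
    case 0 then show ?case by simp
  next
    case (Suc t)
    show ?case
    proof (cases "ds_sample_time (Suc t)")
      case True then show ?thesis by auto
    next
      case False
      then have "t \<noteq> 0" unfolding ds_sample_time_def by (metis One_nat_def power_0)
      then obtain s where s: "1 \<le> s \<and> ds_sample_time s \<and> (\<forall>\<omega>\<in>space M. th t \<omega> = th s \<omega>)" using Suc by auto
      have "\<forall>\<omega>\<in>space M. th (Suc t) \<omega> = th t \<omega>" using keep[of "Suc t"] False \<open>t \<noteq> 0\<close> by auto
      then show ?thesis using s by auto
    qed
  qed
  have EJ: "(\<integral>\<omega>. J (th t \<omega>) \<partial>M) = (\<integral>\<omega>. J (thS \<omega>) \<partial>M)" if t1: "1 \<le> t" for t
  proof -
    obtain s where s: "1 \<le> s" "ds_sample_time s" "\<forall>\<omega>\<in>space M. th t \<omega> = th s \<omega>"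
      using sample_back[OF t1] by blast
    have D: "distr M borel (th s) = distr M borel thS"
    proof (rule same_law[OF prob histm th_meas thS_meas])
      fix hs and Bs :: "real set" assume Bs: "Bs \<in> sets borel"
      show "measure M {\<omega>\<in>space M. th s \<omega> \<in> Bs \<and> history \<pi> x th s \<omega> = hs} * measure M {\<omega>\<in>space M. history \<pi> x th s \<omega> = hs}
          = measure M {\<omega>\<in>space M. thS \<omega> \<in> Bs \<and> history \<pi> x th s \<omega> = hs} * measure M {\<omega>\<in>space M. history \<pi> x th s \<omega> = hs}"
        using posterior[OF s(1) s(2) Bs, of UNIV hs] by simp
    qed
    have "(\<integral>\<omega>. J (th t \<omega>) \<partial>M) = (\<integral>\<omega>. J (th s \<omega>) \<partial>M)"
      using s(3) by (auto intro!: Bochner_Integration.integral_cong)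
    also have "\<dots> = integral\<^sup>L (distr M borel (th s)) J"
      by (rule integral_distr[OF th_meas J_meas, symmetric])
    also have "\<dots> = integral\<^sup>L (distr M borel thS) J" by (simp only: D)
    also have "\<dots> = (\<integral>\<omega>. J (thS \<omega>) \<partial>M)"
      by (rule integral_distr[OF thS_meas J_meas])
    finally show ?thesis .
  qed
  have Eg: "(\<integral>\<omega>. g t \<omega> \<partial>M) = (\<integral>\<omega>. h (xi t \<omega>) (th t \<omega>) \<partial>M)" if t1: "1 \<le> t" for t
  proof -
    have CL: "(\<integral>\<^sup>+\<omega>. ennreal (h (xi t \<omega>) (th t \<omega>)) \<partial>M)
       = (\<integral>\<^sup>+\<omega>. \<integral>\<^sup>+y. ennreal (pmf (P (x t \<omega>) (\<pi> (x t \<omega>) (th t \<omega>)) (th t \<omega>)) y) * ennreal (h y (th t \<omega>)) \<partial>count_space UNIV \<partial>M)"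
    proof (rule cond_law[OF prob histm xi_meas th_meas pm, where \<phi>=h])
      fix hs y and D :: "real set" assume D: "D \<in> sets borel"
      show "measure M {\<omega>\<in>space M. history \<pi> x th t \<omega> = hs \<and> th t \<omega> \<in> D \<and> xi t \<omega> = y}
         = (\<integral>\<omega>. indicator {\<omega>\<in>space M. history \<pi> x th t \<omega> = hs \<and> th t \<omega> \<in> D} \<omega> * pmf (P (x t \<omega>) (\<pi> (x t \<omega>) (th t \<omega>)) (th t \<omega>)) y \<partial>M)"
        using imaginary[OF t1 _ D, of UNIV hs y] by simp
    qed (auto simp: pmf_le_1 h_meas)
    also have "\<dots> = (\<integral>\<^sup>+\<omega>. ennreal (g t \<omega>) \<partial>M)"
    proof (rule nn_integral_cong)
      fix \<omega> assume om: "\<omega> \<in> space M"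
      have th: "th t \<omega> \<in> \<Theta>" by (rule th_in[OF t1 om])
      let ?q = "P (x t \<omega>) (\<pi> (x t \<omega>) (th t \<omega>)) (th t \<omega>)"
      have "(\<integral>\<^sup>+y. ennreal (pmf ?q y) * ennreal (h y (th t \<omega>)) \<partial>count_space UNIV) = (\<integral>\<^sup>+y. ennreal (h y (th t \<omega>)) \<partial>measure_pmf ?q)"
        by (simp add: nn_integral_measure_pmf)
      also have "\<dots> = ennreal (g t \<omega>)"
        unfolding g_def by (rule nn_integral_eq_integral[OF exp_int[OF th]]) (use h_range[OF th] in auto)
      finally show "(\<integral>\<^sup>+y. ennreal (pmf ?q y) * ennreal (h y (th t \<omega>)) \<partial>count_space UNIV) = ennreal (g t \<omega>)" .
    qed
    also have "\<dots> = ennreal (\<integral>\<omega>. g t \<omega> \<partial>M)"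
      by (rule nn_integral_eq_integral[OF ig[OF t1]]) (use gb[OF t1] in auto)
    finally have e1: "ennreal (\<integral>\<omega>. g t \<omega> \<partial>M) = (\<integral>\<^sup>+\<omega>. ennreal (h (xi t \<omega>) (th t \<omega>)) \<partial>M)" by simp
    have e2: "(\<integral>\<^sup>+\<omega>. ennreal (h (xi t \<omega>) (th t \<omega>)) \<partial>M) = ennreal (\<integral>\<omega>. h (xi t \<omega>) (th t \<omega>) \<partial>M)"
      by (rule nn_integral_eq_integral[OF ih[OF xi_meas t1]]) (use hb[OF t1] in auto)
    have n1: "0 \<le> (\<integral>\<omega>. g t \<omega> \<partial>M)" by (rule integral_nonneg_AE) (use gb[OF t1] in auto)
    have n2: "0 \<le> (\<integral>\<omega>. h (xi t \<omega>) (th t \<omega>) \<partial>M)" by (rule integral_nonneg_AE) (use hb[OF t1] in auto)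
    show ?thesis using e1 e2 n1 n2 by simp
  qed
  define ea where "ea t = (\<integral>\<omega>. h (x t \<omega>) (th t \<omega>) \<partial>M)" for t
  define eb where "eb t = (\<integral>\<omega>. h (x (Suc t) \<omega>) (th t \<omega>) \<partial>M)" for t
  define ec where "ec t = (\<integral>\<omega>. h (x (Suc t) \<omega>) (th t \<omega>) - h (xi t \<omega>) (th t \<omega>) \<partial>M)" for t
  define ind :: "nat \<Rightarrow> real" where "ind t = (\<integral>\<omega>. indicator (policy_change_event M t) \<omega> \<partial>M)" for t
  have decomp: "(\<integral>\<omega>. loss (x t \<omega>) (\<pi> (x t \<omega>) (th t \<omega>)) - J (thS \<omega>) \<partial>M) = (ea t - eb t) + ec t"
    if t1: "1 \<le> t" for t
  proof -
    have "(\<integral>\<omega>. loss (x t \<omega>) (\<pi> (x t \<omega>) (th t \<omega>)) - J (thS \<omega>) \<partial>M)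
        = (\<integral>\<omega>. (J (th t \<omega>) - J (thS \<omega>)) + (h (x t \<omega>) (th t \<omega>) - g t \<omega>) \<partial>M)"
      using geq[OF t1] by (auto intro!: Bochner_Integration.integral_cong)
    also have "\<dots> = ((\<integral>\<omega>. J (th t \<omega>) \<partial>M) - (\<integral>\<omega>. J (thS \<omega>) \<partial>M)) + ((\<integral>\<omega>. h (x t \<omega>) (th t \<omega>) \<partial>M) - (\<integral>\<omega>. g t \<omega> \<partial>M))"
      using iJ[OF t1] iJS ih[OF x_meas t1] ig[OF t1] by simp
    also have "\<dots> = ea t - (\<integral>\<omega>. h (xi t \<omega>) (th t \<omega>) \<partial>M)"
      using EJ[OF t1] Eg[OF t1] unfolding ea_def by simp
    also have "\<dots> = (ea t - eb t) + ec t"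
      unfolding eb_def ec_def using ih[OF x_meas t1] ih[OF xi_meas t1] by simp
    finally show ?thesis .
  qed
  have "(\<Sum>t = 1..T. (\<integral>\<omega>. loss (x t \<omega>) (\<pi> (x t \<omega>) (th t \<omega>)) - J (thS \<omega>) \<partial>M))
      = (\<Sum>t = 1..T. ea t - eb t) + (\<Sum>t = 1..T. ec t)"
    by (simp add: decomp sum.distrib)
  also have "(\<Sum>t = 1..T. ea t - eb t) \<le> H * (\<Sum>t=1..T. ind t) + H"
  proof (rule telescope[where S=ds_sample_time, OF Hnn])
    fix t :: nat assume t1: "1 \<le> t"
    show "ea t \<le> H" unfolding ea_def
      by (rule integral_le_const[OF ih[OF x_meas t1]]) (use hb[OF t1] in auto)
    show "0 \<le> eb t" unfolding eb_def
      by (rule integral_nonneg_AE) (use hb[OF t1] in auto)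
  next
    show "ds_sample_time 1" unfolding ds_sample_time_def by (rule exI[of _ 0]) simp
  next
    fix t :: nat assume t2: "2 \<le> t" "\<not> ds_sample_time t"
    have "Suc (t - 1) = t" using t2 by simp
    then show "ea t = eb (t - 1)" unfolding ea_def eb_def
      using keep[OF t2] by (auto intro!: Bochner_Integration.integral_cong)
  next
    fix t
    show "ind t = (if ds_sample_time t then 1 else 0)"
      unfolding ind_def policy_change_event_def
      by (cases "ds_sample_time t") (simp_all add: prob_space)
  qed
  finally show ?thesis unfolding ind_def ec_def by simp
qed


end
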